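(* In the setting of the context, assume the matrix representing $A$ with respect to the fixed feasible basis has constant row sum $\theta_r$ (i.e. $c_i+a_i+b_i=\theta_r$ for $0\le i\le d$), where $\theta_r$ is an eigenvalue of $A$. Let $s\in\{0,\dots,d\}$ with $s\ne r$. The following are equivalent: (i) in $\Delta$, vertex $r$ is adjacent to vertex $s$ and to no other vertex; (ii) $a^*_r\ne\theta^*_0$ and $$u_i(\theta_s)=\frac{\theta^*_i-a^*_r}{\theta^*_0-a^*_r}\qquad(0\le i\le d).$$
   Context: Let $\mathbb F$ be a field, $d\ge1$, $V$ an $\mathbb F$-vector space of dimension $d+1$, $\mathcal A=\mathrm{End}(V)$ with identity $I$. Let $E^*_0,\dots,E^*_d\in\mathcal A$ satisfy $E^*_iE^*_j=\delta_{i,j}E^*_i$, $\mathrm{rank}(E^*_i)=1$. Let $A\in\mathcal A$ satisfy $E^*_iAE^*_j=0$ if $|i-j|>1$ and $\neq0$ if $|i-j|=1$. Assume $A$ has $d+1$ distinct eigenvalues $\theta_0,\dots,\theta_d\in\mathbb F$ with primitive idempotents $E_i=\prod_{j\ne i}\frac{A-\theta_jI}{\theta_i-\theta_j}$. Let $\theta^*_i\in\mathbb F$, $A^*=\sum_i\theta^*_iE^*_i$, $a^*_i=\mathrm{tr}(E_iA^* )$. Let $\Delta$ be the graph on $\{0,\dots,d\}$ with $i\sim j$ iff $i\ne j$ and $E_iA^*E_j\ne0$. A basis $v_0,\dots,v_d$ of $V$ is feasible if $v_i\in E^*_iV$ for all $i$; fix one. Then $Av_i=b_{i-1}v_{i-1}+a_iv_i+c_{i+1}v_{i+1}$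 ($v_{-1}=v_{d+1}=0$), with $a_i=\mathrm{tr}(E^*_iA)$, nonzero $b_0,\dots,b_{d-1}$, $c_1,\dots,c_d$, and $b_d=c_0=0$. Define $u_0,\dots,u_{d+1}\in\mathbb F[\lambda]$ by $u_{-1}=0$, $u_0=1$, $\lambda u_i=c_iu_{i-1}+a_iu_i+b_iu_{i+1}$ $(0\le i\le d-1)$, $\lambda u_d=c_du_{d-1}+a_du_d+u_{d+1}/(b_0\cdots b_{d-1})$. *)

theory Defs
  imports "Jordan_Normal_Form.DL_Rank" "Jordan_Normal_Form.Char_Poly"
    "HOL-Computational_Algebra.Polynomial"
begin

definition mat_trace :: "'a::comm_ring_1 mat \<Rightarrow> 'a" where
  "mat_trace M = (\<Sum>i<dim_row M. M $$ (i, i))"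

definition prim_idem :: "nat \<Rightarrow> (nat \<Rightarrow> 'a::field) \<Rightarrow> 'a mat \<Rightarrow> nat \<Rightarrow> 'a mat" where
  "prim_idem n \<theta> A i =
     foldr (\<lambda>j M. ((1 / (\<theta> i - \<theta> j)) \<cdot>\<^sub>m (A - \<theta> j \<cdot>\<^sub>m 1\<^sub>m n)) * M)
           (filter (\<lambda>j. j \<noteq> i) [0..<n]) (1\<^sub>m n)"

definition dual_mat :: "nat \<Rightarrow> (nat \<Rightarrow> 'a::field) \<Rightarrow> (nat \<Rightarrow> 'a mat) \<Rightarrow> 'a mat" where
  "dual_mat n \<theta>s Es = foldr (\<lambda>i M. \<theta>s i \<cdot>\<^sub>m Es i + M) [0..<n] (0\<^sub>m n n)"

definition astar :: "nat \<Rightarrow> (nat \<Rightarrow> 'a::field) \<Rightarrow> 'a mat \<Rightarrow> (nat \<Rightarrow> 'a) \<Rightarrow> (nat \<Rightarrow> 'a mat) \<Rightarrow> nat \<Rightarrow> 'a" where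
  "astar n \<theta> A \<theta>s Es i = mat_trace (prim_idem n \<theta> A i * dual_mat n \<theta>s Es)"

definition delta_adj :: "nat \<Rightarrow> (nat \<Rightarrow> 'a::field) \<Rightarrow> 'a mat \<Rightarrow> (nat \<Rightarrow> 'a) \<Rightarrow> (nat \<Rightarrow> 'a mat) \<Rightarrow> nat \<Rightarrow> nat \<Rightarrow> bool" where
  "delta_adj n \<theta> A \<theta>s Es i j \<longleftrightarrow>
     i \<noteq> j \<and> prim_idem n \<theta> A i * dual_mat n \<theta>s Es * prim_idem n \<theta> A j \<noteq> 0\<^sub>m n n"

text \<open>The polynomials u_0, u_1, ... defined by u_(-1) = 0, u_0 = 1 and
  lambda u_i = c_i u_(i-1) + a_i u_i + b_i u_(i+1). (Only u_0..u_d are used;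
  u_(d+1) with its different normalisation is not needed.)\<close>
fun upol :: "(nat \<Rightarrow> 'a::field) \<Rightarrow> (nat \<Rightarrow> 'a) \<Rightarrow> (nat \<Rightarrow> 'a) \<Rightarrow> nat \<Rightarrow> 'a poly" where
  "upol a b c 0 = 1"
| "upol a b c (Suc 0) = smult (1 / b 0) [:- a 0, 1:]"
| "upol a b c (Suc (Suc i)) =
     smult (1 / b (Suc i)) ([:- a (Suc i), 1:] * upol a b c (Suc i) - smult (c (Suc i)) (upol a b c i))"

end

theory Submission
  imports Defs
begin


definition vsm :: "nat \<Rightarrow> nat set \<Rightarrow> (nat \<Rightarrow> 'a::comm_ring_1 vec) \<Rightarrow> 'a vec" where
  "vsm n I f = vec n (\<lambda>a. \<Sum>i\<in>I. f i $ a)"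

lemma vsm_carrier[simp]: "vsm n I f \<in> carrier_vec n" and dim_vsm[simp]: "dim_vec (vsm n I f) = n"
  by (auto simp: vsm_def)

lemma index_vsm[simp]: "a < n \<Longrightarrow> vsm n I f $ a = (\<Sum>i\<in>I. f i $ a)"
  by (simp add: vsm_def)

lemma vsm_cong: "(\<And>i. i \<in> I \<Longrightarrow> f i = g i) \<Longrightarrow> vsm n I f = vsm n I g"
  unfolding vsm_def by (auto intro!: sum.cong)

lemma index_mult_mat_vec_sum:
  assumes "M \<in> carrier_mat m n" "w \<in> carrier_vec n" "a < m"
  shows "(M *\<^sub>v w) $ a = (\<Sum>b<n. M $$ (a,b) * w $ b)"
  using assms by (simp add: scalar_prod_def row_def lessThan_atLeast0)

lemma mult_mat_vec_vsm:
  assumes M: "M \<in> carrier_mat m n" and f: "\<And>i. i\<in>I \<Longrightarrow> f i \<in> carrier_vec n"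
  shows "M *\<^sub>v vsm n I f = vsm m I (\<lambda>i. M *\<^sub>v f i)"
proof (rule eq_vecI)
  fix a assume "a < dim_vec (vsm m I (\<lambda>i. M *\<^sub>v f i))"
  then have a: "a < m" by simp
  have "(M *\<^sub>v vsm n I f) $ a = (\<Sum>b<n. M $$ (a,b) * (\<Sum>i\<in>I. f i $ b))"
    using M a by (simp add: scalar_prod_def row_def lessThan_atLeast0)
  also have "\<dots> = (\<Sum>i\<in>I. \<Sum>b<n. M $$ (a,b) * f i $ b)"
    by (simp add: sum_distrib_left sum.swap[of _ I])
  also have "\<dots> = vsm m I (\<lambda>i. M *\<^sub>v f i) $ a"
    using M a f by (auto simp del: index_mult_mat_vec simp: index_mult_mat_vec_sum[OF M _ a] intro!: sum.cong)
  finally show "(M *\<^sub>v vsm n I f) $ a = vsm m I (\<lambda>i. M *\<^sub>v f i) $ a" .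
qed (use M in auto)

context vec_space
begin

lemma lincomb_vsm:
  assumes inj: "inj_on w I" and W: "w ` I \<subseteq> carrier_vec n"
  shows "lincomb g (w ` I) = vsm n I (\<lambda>i. g (w i) \<cdot>\<^sub>v w i)"
proof (rule eq_vecI)
  show "dim_vec (lincomb g (w ` I)) = dim_vec (vsm n I (\<lambda>i. g (w i) \<cdot>\<^sub>v w i))"
    using lincomb_closed[OF W] by auto
  fix a assume "a < dim_vec (vsm n I (\<lambda>i. g (w i) \<cdot>\<^sub>v w i))"
  then have a: "a < n" by simp
  have "lincomb g (w ` I) $ a = (\<Sum>x\<in>w ` I. (g x \<cdot>\<^sub>v x) $ a)"
    unfolding lincomb_def by (rule finsum_index[OF a], use W in auto)
  also have "\<dots> = (\<Sum>i\<in>I. (g (w i) \<cdot>\<^sub>v w i) $ a)"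
    by (rule sum.reindex[OF inj, unfolded comp_def])
  finally show "lincomb g (w ` I) $ a = vsm n I (\<lambda>i. g (w i) \<cdot>\<^sub>v w i) $ a" using a by simp
qed

lemma basis_span:
  assumes B: "basis (w ` I)" and fin: "finite I" and inj: "inj_on w I"
    and z: "z \<in> carrier_vec n"
  shows "\<exists>y. z = vsm n I (\<lambda>i. y i \<cdot>\<^sub>v w i)"
proof -
  have W: "w ` I \<subseteq> carrier_vec n" using B unfolding basis_def by auto
  have "z \<in> span (w ` I)" using B z unfolding basis_def by auto
  then obtain g where "z = lincomb g (w ` I)"
    using finite_span[of "w ` I"] fin W by auto
  then show ?thesis using lincomb_vsm[OF inj W] by (intro exI[of _ "\<lambda>i. g (w i)"]) simp
qed

lemma basis_indep:
  assumes B: "basis (w ` I)" and fin: "finite I" and inj: "inj_on w I"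
    and z: "vsm n I (\<lambda>i. y i \<cdot>\<^sub>v w i) = 0\<^sub>v n" and i: "i \<in> I"
  shows "y i = 0"
proof (rule ccontr)
  assume ne: "y i \<noteq> 0"
  have W: "w ` I \<subseteq> carrier_vec n" using B unfolding basis_def by auto
  define g where "g = (\<lambda>u. y (the_inv_into I w u))"
  have "lincomb g (w ` I) = vsm n I (\<lambda>j. y j \<cdot>\<^sub>v w j)"
    unfolding lincomb_vsm[OF inj W] g_def using inj by (auto intro!: vsm_cong simp: the_inv_into_f_f)
  then have "lin_dep (w ` I)"
    using z ne i inj by (intro lin_dep_crit[where A="w ` I" and S="w ` I" and a=g and v="w i"]) (auto simp: g_def the_inv_into_f_f fin)
  then show False using B unfolding basis_def by auto
qed

lemma indep_basis:
  assumes fin: "finite I" and inj: "inj_on w I" and W: "w ` I \<subseteq> carrier_vec n"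
    and card: "card I = n"
    and ind: "\<And>y. vsm n I (\<lambda>i. y i \<cdot>\<^sub>v w i) = 0\<^sub>v n \<Longrightarrow> \<forall>i\<in>I. y i = 0"
  shows "basis (w ` I)"
proof (rule dim_li_is_basis)
  show "fin_dim" by simp
  show "finite (w ` I)" using fin by simp
  show "w ` I \<subseteq> carrier_vec n" by fact
  show "dim \<le> card (w ` I)" using card inj by (simp add: card_image dim_is_n)
  show "lin_indpt (w ` I)"
  proof (rule finite_lin_indpt2)
    show "finite (w ` I)" using fin by simp
    show "w ` I \<subseteq> carrier_vec n" by fact
    fix g assume "lincomb g (w ` I) = 0\<^sub>v n"
    then have "vsm n I (\<lambda>i. g (w i) \<cdot>\<^sub>v w i) = 0\<^sub>v n" using lincomb_vsm[OF inj W] by simp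
    from ind[OF this] show "\<forall>v\<in>w ` I. g v = 0" by auto
  qed
qed

end



lemma smult_mat_mult_vec:
  fixes M :: "'a::field mat"
  assumes M: "M \<in> carrier_mat m n" and w: "w \<in> carrier_vec n"
  shows "(k \<cdot>\<^sub>m M) *\<^sub>v w = k \<cdot>\<^sub>v (M *\<^sub>v w)"
proof -
  have kM: "k \<cdot>\<^sub>m M \<in> carrier_mat m n" using M by simp
  show ?thesis using M w
    by (intro eq_vecI) (auto simp: index_mult_mat_vec_sum[OF kM w] index_mult_mat_vec_sum[OF M w]
      sum_distrib_left ac_simps simp del: index_mult_mat_vec)
qed

lemma mat_unit_vec_index:
  fixes M :: "'a::field mat"
  assumes "M \<in> carrier_mat m n" "a < m" "b < n"
  shows "(M *\<^sub>v unit_vec n b) $ a = M $$ (a,b)"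
proof -
  have "(M *\<^sub>v unit_vec n b) $ a = (\<Sum>c<n. M $$ (a,c) * unit_vec n b $ c)"
    using assms by (simp add: index_mult_mat_vec_sum del: index_mult_mat_vec)
  also have "\<dots> = (\<Sum>c<n. if c = b then M $$ (a,c) else 0)"
    by (intro sum.cong) (auto simp: unit_vec_def)
  also have "\<dots> = M $$ (a,b)" using assms by simp
  finally show ?thesis .
qed

lemma prim_idem_foldr:
  fixes A :: "'a::field mat"
  assumes A: "A \<in> carrier_mat n n" and x: "x \<in> carrier_vec n" and Ax: "A *\<^sub>v x = t \<cdot>\<^sub>v x"
  shows "foldr (\<lambda>j M. ((1 / (\<theta> i - \<theta> j)) \<cdot>\<^sub>m (A - \<theta> j \<cdot>\<^sub>m 1\<^sub>m n)) * M) js (1\<^sub>m n) \<in> carrier_mat n n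
   \<and> foldr (\<lambda>j M. ((1 / (\<theta> i - \<theta> j)) \<cdot>\<^sub>m (A - \<theta> j \<cdot>\<^sub>m 1\<^sub>m n)) * M) js (1\<^sub>m n) *\<^sub>v x
       = (\<Prod>j\<leftarrow>js. (t - \<theta> j) / (\<theta> i - \<theta> j)) \<cdot>\<^sub>v x"
proof (induction js)
  case Nil
  then show ?case using x by simp
next
  case (Cons j js)
  let ?M = "foldr (\<lambda>j M. ((1 / (\<theta> i - \<theta> j)) \<cdot>\<^sub>m (A - \<theta> j \<cdot>\<^sub>m 1\<^sub>m n)) * M) js (1\<^sub>m n)"
  let ?p = "(\<Prod>j\<leftarrow>js. (t - \<theta> j) / (\<theta> i - \<theta> j))"
  let ?N = "(1 / (\<theta> i - \<theta> j)) \<cdot>\<^sub>m (A - \<theta> j \<cdot>\<^sub>m 1\<^sub>m n)"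
  have M: "?M \<in> carrier_mat n n" and Mx: "?M *\<^sub>v x = ?p \<cdot>\<^sub>v x" using Cons by auto
  have N: "?N \<in> carrier_mat n n" using A by auto
  have Nx: "?N *\<^sub>v x = ((t - \<theta> j) / (\<theta> i - \<theta> j)) \<cdot>\<^sub>v x"
  proof -
    have "?N *\<^sub>v x = (1 / (\<theta> i - \<theta> j)) \<cdot>\<^sub>v ((A - \<theta> j \<cdot>\<^sub>m 1\<^sub>m n) *\<^sub>v x)"
      using A x by (intro smult_mat_mult_vec) auto
    also have "(A - \<theta> j \<cdot>\<^sub>m 1\<^sub>m n) *\<^sub>v x = A *\<^sub>v x - (\<theta> j \<cdot>\<^sub>m 1\<^sub>m n) *\<^sub>v x"
      using A x by (intro minus_mult_distrib_mat_vec) auto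
    also have "(\<theta> j \<cdot>\<^sub>m 1\<^sub>m n) *\<^sub>v x = \<theta> j \<cdot>\<^sub>v x"
      using x by (subst smult_mat_mult_vec[of _ n n]) auto
    finally show ?thesis using x unfolding Ax
      by (intro eq_vecI) (auto simp: field_simps)
  qed
  have "(?N * ?M) *\<^sub>v x = ?N *\<^sub>v (?M *\<^sub>v x)" using N M x by simp
  also have "\<dots> = ?p \<cdot>\<^sub>v (?N *\<^sub>v x)" unfolding Mx using N x by (rule mult_mat_vec)
  also have "\<dots> = (((t - \<theta> j) / (\<theta> i - \<theta> j)) * ?p) \<cdot>\<^sub>v x" unfolding Nx
    by (simp add: smult_smult_assoc ac_simps)
  finally show ?case using N M by simp
qed

lemma prim_idem_eig:
  fixes A :: "'a::field mat"
  assumes A: "A \<in> carrier_mat n n" and x: "x \<in> carrier_vec n" and Ax: "A *\<^sub>v x = \<theta> k \<cdot>\<^sub>v x"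
    and inj: "inj_on \<theta> {..<n}" and i: "i < n" and k: "k < n"
  shows "prim_idem n \<theta> A i *\<^sub>v x = (if i = k then x else 0\<^sub>v n)"
    and "prim_idem n \<theta> A i \<in> carrier_mat n n"
proof -
  note F = prim_idem_foldr[OF A x Ax, of \<theta> i "filter (\<lambda>j. j \<noteq> i) [0..<n]"]
  show "prim_idem n \<theta> A i \<in> carrier_mat n n" using F unfolding prim_idem_def by auto
  have eq: "prim_idem n \<theta> A i *\<^sub>v x = (\<Prod>j\<leftarrow>filter (\<lambda>j. j \<noteq> i) [0..<n]. (\<theta> k - \<theta> j) / (\<theta> i - \<theta> j)) \<cdot>\<^sub>v x"
    using F unfolding prim_idem_def by auto
  show "prim_idem n \<theta> A i *\<^sub>v x = (if i = k then x else 0\<^sub>v n)"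
  proof (cases "i = k")
    case True
    have "(\<Prod>j\<leftarrow>filter (\<lambda>j. j \<noteq> i) [0..<n]. (\<theta> k - \<theta> j) / (\<theta> i - \<theta> j))
        = (\<Prod>j\<in>set (filter (\<lambda>j. j \<noteq> i) [0..<n]). (\<theta> k - \<theta> j) / (\<theta> i - \<theta> j))"
      by (subst prod.distinct_set_conv_list) auto
    also have "\<dots> = 1" using True inj i
      by (intro prod.neutral) (auto simp: inj_on_def)
    finally show ?thesis using eq True x by simp
  next
    case False
    have "0 \<in> set (map (\<lambda>j. (\<theta> k - \<theta> j) / (\<theta> i - \<theta> j)) (filter (\<lambda>j. j \<noteq> i) [0..<n]))"
      using False k by (auto intro!: image_eqI[of _ _ k])
    then have P0: "(\<Prod>j\<leftarrow>filter (\<lambda>j. j \<noteq> i) [0..<n]. (\<theta> k - \<theta> j) / (\<theta> i - \<theta> j)) = 0"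
      using prod_list_zero_iff by blast
    show ?thesis unfolding eq P0 using False x by (auto intro!: eq_vecI)
  qed
qed

lemma dual_foldr:
  fixes Es :: "nat \<Rightarrow> 'a::field mat"
  assumes Es: "\<And>i. i \<in> set js \<Longrightarrow> Es i \<in> carrier_mat n n" and w: "w \<in> carrier_vec n"
    and Ew: "\<And>i. i \<in> set js \<Longrightarrow> Es i *\<^sub>v w = (if i = j then w else 0\<^sub>v n)"
  shows "foldr (\<lambda>i M. ts i \<cdot>\<^sub>m Es i + M) js (0\<^sub>m n n) \<in> carrier_mat n n \<and>
    foldr (\<lambda>i M. ts i \<cdot>\<^sub>m Es i + M) js (0\<^sub>m n n) *\<^sub>v w = (\<Sum>i\<leftarrow>js. if i = j then ts i else 0) \<cdot>\<^sub>v w"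
  using Es Ew
proof (induction js)
  case Nil
  then show ?case using w by (auto intro!: eq_vecI)
next
  case (Cons i js)
  let ?M = "foldr (\<lambda>i M. ts i \<cdot>\<^sub>m Es i + M) js (0\<^sub>m n n)"
  have M: "?M \<in> carrier_mat n n" and Mw: "?M *\<^sub>v w = (\<Sum>i\<leftarrow>js. if i = j then ts i else 0) \<cdot>\<^sub>v w"
    using Cons by auto
  have Ei: "Es i \<in> carrier_mat n n" using Cons by auto
  have "(ts i \<cdot>\<^sub>m Es i + ?M) *\<^sub>v w = (ts i \<cdot>\<^sub>m Es i) *\<^sub>v w + ?M *\<^sub>v w"
    using Ei M w by (intro add_mult_distrib_mat_vec) auto
  also have "(ts i \<cdot>\<^sub>m Es i) *\<^sub>v w = ts i \<cdot>\<^sub>v (Es i *\<^sub>v w)" using Ei w by (rule smult_mat_mult_vec)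
  finally show ?case using Ei M Cons(3)[of i] w unfolding Mw
    by (auto intro!: eq_vecI simp: field_simps)
qed

lemma trace_rank1:
  fixes M :: "'a::field mat"
  assumes M: "M \<in> carrier_mat n n" and x: "x \<in> carrier_vec n" and x0: "x \<noteq> 0\<^sub>v n"
    and img: "\<And>z. z \<in> carrier_vec n \<Longrightarrow> \<exists>l. M *\<^sub>v z = l \<cdot>\<^sub>v x"
    and Mx: "M *\<^sub>v x = \<mu> \<cdot>\<^sub>v x"
  shows "mat_trace M = \<mu>"
proof -
  have "\<forall>b. \<exists>l. b < n \<longrightarrow> M *\<^sub>v unit_vec n b = l \<cdot>\<^sub>v x" using img by auto
  then obtain h where h: "\<And>b. b < n \<Longrightarrow> M *\<^sub>v unit_vec n b = h b \<cdot>\<^sub>v x" by metis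
  have Mab: "M $$ (a,b) = h b * x $ a" if "a < n" "b < n" for a b
    using mat_unit_vec_index[OF M that] h[OF that(2)] that x by simp
  obtain a where a: "a < n" "x $ a \<noteq> 0" using x0 x by (metis eq_vecI index_zero_vec carrier_vecD)
  have "(M *\<^sub>v x) $ a = (\<Sum>b<n. M $$ (a,b) * x $ b)"
    using M x a by (simp add: index_mult_mat_vec_sum del: index_mult_mat_vec)
  also have "\<dots> = x $ a * (\<Sum>b<n. h b * x $ b)"
    using a by (simp add: Mab sum_distrib_left ac_simps)
  finally have "x $ a * (\<Sum>b<n. h b * x $ b) = \<mu> * x $ a" using Mx a x by simp
  then have S: "(\<Sum>b<n. h b * x $ b) = \<mu>" using a by (simp add: mult.commute)
  have "mat_trace M = (\<Sum>b<n. M $$ (b,b))" using M by (simp add: mat_trace_def)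
  also have "\<dots> = (\<Sum>b<n. h b * x $ b)" by (intro sum.cong) (auto simp: Mab)
  finally show ?thesis using S by simp
qed



definition Bop :: "(nat \<Rightarrow> 'a::field) \<Rightarrow> (nat \<Rightarrow> 'a) \<Rightarrow> (nat \<Rightarrow> 'a) \<Rightarrow> (nat \<Rightarrow> 'a) \<Rightarrow> nat \<Rightarrow> 'a" where
  "Bop a b c y i = c i * y (i - 1) + a i * y i + b i * y (Suc i)"

lemma upol_rec:
  fixes a b c :: "nat \<Rightarrow> 'a::field"
  assumes b: "b i \<noteq> 0" and c0: "c 0 = 0"
  shows "Bop a b c (\<lambda>i. poly (upol a b c i) t) i = t * poly (upol a b c i) t"
proof (cases i)
  case 0
  then show ?thesis using b c0 by (simp add: Bop_def field_simps)
next
  case (Suc j)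
  then show ?thesis using b by (simp add: Bop_def field_simps)
qed

lemma eig_coord:
  fixes a b c y :: "nat \<Rightarrow> 'a::field"
  assumes b: "\<forall>i<d. b i \<noteq> 0" and c0: "c 0 = 0"
    and ey: "\<forall>i\<le>d. Bop a b c y i = t * y i"
  shows "\<forall>i\<le>d. y i = y 0 * poly (upol a b c i) t"
proof -
  have "Suc i \<le> d \<longrightarrow> y i = y 0 * poly (upol a b c i) t \<and> y (Suc i) = y 0 * poly (upol a b c (Suc i)) t" for i
  proof (induction i)
    case 0
    show ?case
    proof
      assume "Suc 0 \<le> d"
      then have "Bop a b c y 0 = t * y 0" and "b 0 \<noteq> 0" using ey b by auto
      then show "y 0 = y 0 * poly (upol a b c 0) t \<and> y (Suc 0) = y 0 * poly (upol a b c (Suc 0)) t"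
        using c0 by (simp add: Bop_def field_simps)
    qed
  next
    case (Suc i)
    show ?case
    proof
      assume le: "Suc (Suc i) \<le> d"
      with Suc have IH: "y i = y 0 * poly (upol a b c i) t" "y (Suc i) = y 0 * poly (upol a b c (Suc i)) t" by auto
      have E: "Bop a b c y (Suc i) = t * y (Suc i)" and bn: "b (Suc i) \<noteq> 0" using ey b le by auto
      from E have "y (Suc (Suc i)) = ((t - a (Suc i)) * y (Suc i) - c (Suc i) * y i) / b (Suc i)"
        using bn by (simp add: Bop_def field_simps)
      then show "y (Suc i) = y 0 * poly (upol a b c (Suc i)) t \<and> y (Suc (Suc i)) = y 0 * poly (upol a b c (Suc (Suc i))) t"
        using IH bn by (simp add: field_simps)
    qed
  qed
  note H = this
  show ?thesis
  proof (intro allI impI)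
    fix i assume i: "i \<le> d"
    show "y i = y 0 * poly (upol a b c i) t"
    proof (cases i)
      case 0
      then show ?thesis by simp
    next
      case (Suc j)
      then show ?thesis using H[of j] i by auto
    qed
  qed
qed

fun Kf :: "(nat \<Rightarrow> 'a::field) \<Rightarrow> (nat \<Rightarrow> 'a) \<Rightarrow> nat \<Rightarrow> 'a" where
  "Kf b c 0 = 1"
| "Kf b c (Suc i) = Kf b c i * b i / c (Suc i)"

definition form :: "(nat \<Rightarrow> 'a::field) \<Rightarrow> (nat \<Rightarrow> 'a) \<Rightarrow> nat \<Rightarrow> (nat \<Rightarrow> 'a) \<Rightarrow> (nat \<Rightarrow> 'a) \<Rightarrow> 'a" where
  "form b c d y z = (\<Sum>i\<le>d. Kf b c i * y i * z i)"

lemma Kf_nz: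
  assumes "\<forall>i<d. b i \<noteq> 0" "\<forall>i. 1 \<le> i \<and> i \<le> d \<longrightarrow> c i \<noteq> 0"
  shows "i \<le> d \<Longrightarrow> Kf b c i \<noteq> 0"
  using assms by (induction i) auto

lemma shift_sum:
  fixes b c f g :: "nat \<Rightarrow> 'a::field"
  assumes c: "\<forall>i. 1 \<le> i \<and> i \<le> d \<longrightarrow> c i \<noteq> 0" and c0: "c 0 = 0"
  shows "m \<le> d \<Longrightarrow> (\<Sum>i\<le>m. Kf b c i * c i * f (i - 1) * g i) = (\<Sum>i<m. Kf b c i * b i * f i * g (Suc i))"
proof (induction m)
  case 0
  then show ?case using c0 by simp
next
  case (Suc m)
  then have "c (Suc m) \<noteq> 0" using c by auto
  then show ?case using Suc by (simp add: field_simps)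
qed

lemma form_selfadj:
  fixes a b c y z :: "nat \<Rightarrow> 'a::field"
  assumes c: "\<forall>i. 1 \<le> i \<and> i \<le> d \<longrightarrow> c i \<noteq> 0" and c0: "c 0 = 0" and bd: "b d = 0"
  shows "form b c d (Bop a b c y) z = form b c d y (Bop a b c z)"
proof -
  have S: "(\<Sum>i\<le>d. Kf b c i * c i * f (i - 1) * g i) = (\<Sum>i\<le>d. Kf b c i * b i * f i * g (Suc i))" for f g :: "nat \<Rightarrow> 'a"
    using shift_sum[OF c c0, where m=d and f=f and g=g and b=b] bd by (simp add: lessThan_Suc_atMost[symmetric])
  have "form b c d (Bop a b c y) z = (\<Sum>i\<le>d. Kf b c i * c i * y (i - 1) * z i)
      + (\<Sum>i\<le>d. Kf b c i * a i * y i * z i) + (\<Sum>i\<le>d. Kf b c i * b i * y (Suc i) * z i)"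
    unfolding form_def sum.distrib[symmetric] by (intro sum.cong) (simp_all add: Bop_def algebra_simps)
  moreover have "form b c d y (Bop a b c z) = (\<Sum>i\<le>d. Kf b c i * c i * z (i - 1) * y i)
      + (\<Sum>i\<le>d. Kf b c i * a i * y i * z i) + (\<Sum>i\<le>d. Kf b c i * b i * z (Suc i) * y i)"
    unfolding form_def sum.distrib[symmetric] by (intro sum.cong) (simp_all add: Bop_def algebra_simps)
  ultimately show ?thesis using S[of y z] S[of z y] by (simp add: ac_simps)
qed



lemma vsm_diff:
  assumes w: "\<And>i. i \<in> I \<Longrightarrow> w i \<in> carrier_vec n"
  shows "vsm n I (\<lambda>i. (y i - z i) \<cdot>\<^sub>v w i) = vsm n I (\<lambda>i. y i \<cdot>\<^sub>v w i) - vsm n I (\<lambda>i. z i \<cdot>\<^sub>v w i)"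
proof (rule eq_vecI)
  have wd: "\<And>i. i \<in> I \<Longrightarrow> dim_vec (w i) = n" using w by auto
  fix a assume "a < dim_vec (vsm n I (\<lambda>i. y i \<cdot>\<^sub>v w i) - vsm n I (\<lambda>i. z i \<cdot>\<^sub>v w i))"
  then have a: "a < n" by simp
  have "(\<Sum>i\<in>I. ((y i - z i) \<cdot>\<^sub>v w i) $ a) = (\<Sum>i\<in>I. (y i \<cdot>\<^sub>v w i) $ a - (z i \<cdot>\<^sub>v w i) $ a)"
    using wd a by (intro sum.cong) (auto simp: algebra_simps)
  then show "vsm n I (\<lambda>i. (y i - z i) \<cdot>\<^sub>v w i) $ a = (vsm n I (\<lambda>i. y i \<cdot>\<^sub>v w i) - vsm n I (\<lambda>i. z i \<cdot>\<^sub>v w i)) $ a"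
    using a by (simp add: sum_subtractf)
qed simp

lemma vsm_smult:
  assumes w: "\<And>i. i \<in> I \<Longrightarrow> w i \<in> carrier_vec n"
  shows "t \<cdot>\<^sub>v vsm n I (\<lambda>i. y i \<cdot>\<^sub>v w i) = vsm n I (\<lambda>i. (t * y i) \<cdot>\<^sub>v w i)"
proof (rule eq_vecI)
  have wd: "\<And>i. i \<in> I \<Longrightarrow> dim_vec (w i) = n" using w by auto
  fix a assume "a < dim_vec (vsm n I (\<lambda>i. (t * y i) \<cdot>\<^sub>v w i))"
  then have a: "a < n" by simp
  have "t * (\<Sum>i\<in>I. (y i \<cdot>\<^sub>v w i) $ a) = (\<Sum>i\<in>I. ((t * y i) \<cdot>\<^sub>v w i) $ a)"
    unfolding sum_distrib_left using wd a by (intro sum.cong) (auto simp: algebra_simps)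
  then show "(t \<cdot>\<^sub>v vsm n I (\<lambda>i. y i \<cdot>\<^sub>v w i)) $ a = vsm n I (\<lambda>i. (t * y i) \<cdot>\<^sub>v w i) $ a"
    using a by simp
qed simp

lemma vsm_zero:
  assumes w: "\<And>i. i \<in> I \<Longrightarrow> w i \<in> carrier_vec n"
    and y: "\<And>i. i \<in> I \<Longrightarrow> y i = 0"
  shows "vsm n I (\<lambda>i. y i \<cdot>\<^sub>v w i) = 0\<^sub>v n"
proof -
  have wd: "\<And>i. i \<in> I \<Longrightarrow> dim_vec (w i) = n" using w by auto
  show ?thesis using wd y by (intro eq_vecI) (auto intro!: sum.neutral)
qed

lemma vsm_delta:
  assumes i: "i \<in> I" and fin: "finite I" and w: "w \<in> carrier_vec n"
  shows "vsm n I (\<lambda>k. if k = i then w else 0\<^sub>v n) = w"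
proof (rule eq_vecI)
  fix a assume "a < dim_vec w"
  then have a: "a < n" using w by simp
  have "(\<Sum>k\<in>I. (if k = i then w else 0\<^sub>v n) $ a) = (\<Sum>k\<in>I. if k = i then w $ a else 0)"
    using a by (intro sum.cong) auto
  then show "vsm n I (\<lambda>k. if k = i then w else 0\<^sub>v n) $ a = w $ a" using a i fin by simp
qed (use w in simp)

lemma vsm_comb:
  assumes w: "\<And>i. i \<in> I \<Longrightarrow> w i \<in> carrier_vec n"
  shows "vsm n K (\<lambda>k. g k \<cdot>\<^sub>v vsm n I (\<lambda>i. y k i \<cdot>\<^sub>v w i)) = vsm n I (\<lambda>i. (\<Sum>k\<in>K. g k * y k i) \<cdot>\<^sub>v w i)"
proof (rule eq_vecI)
  have wd: "\<And>i. i \<in> I \<Longrightarrow> dim_vec (w i) = n" using w by auto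
  fix a assume "a < dim_vec (vsm n I (\<lambda>i. (\<Sum>k\<in>K. g k * y k i) \<cdot>\<^sub>v w i))"
  then have a: "a < n" by simp
  have "(\<Sum>k\<in>K. (g k \<cdot>\<^sub>v vsm n I (\<lambda>i. y k i \<cdot>\<^sub>v w i)) $ a) = (\<Sum>k\<in>K. \<Sum>i\<in>I. g k * y k i * w i $ a)"
    using a wd by (intro sum.cong) (auto simp: sum_distrib_left ac_simps)
  also have "\<dots> = (\<Sum>i\<in>I. \<Sum>k\<in>K. g k * y k i * w i $ a)" by (rule sum.swap)
  also have "\<dots> = (\<Sum>i\<in>I. ((\<Sum>k\<in>K. g k * y k i) \<cdot>\<^sub>v w i) $ a)"
    using a wd by (intro sum.cong) (auto simp: sum_distrib_right)
  finally show "vsm n K (\<lambda>k. g k \<cdot>\<^sub>v vsm n I (\<lambda>i. y k i \<cdot>\<^sub>v w i)) $ a = vsm n I (\<lambda>i. (\<Sum>k\<in>K. g k * y k i) \<cdot>\<^sub>v w i) $ a"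
    using a by simp
qed simp

lemma mat_zero_from_vec:
  fixes M :: "'a::field mat"
  assumes M: "M \<in> carrier_mat n n" and z: "\<And>z. z \<in> carrier_vec n \<Longrightarrow> M *\<^sub>v z = 0\<^sub>v n"
  shows "M = 0\<^sub>m n n"
proof (rule eq_matI)
  fix i j assume "i < dim_row (0\<^sub>m n n)" "j < dim_col (0\<^sub>m n n)"
  then have ij: "i < n" "j < n" by auto
  have "M $$ (i,j) = (M *\<^sub>v unit_vec n j) $ i" using mat_unit_vec_index[OF M ij] by simp
  also have "\<dots> = 0" using z[of "unit_vec n j"] ij by simp
  finally show "M $$ (i,j) = 0\<^sub>m n n $$ (i,j)" using ij by simp
qed (use M in auto)

lemma form_cong:
  "(\<And>i. i \<le> d \<Longrightarrow> y i = y' i) \<Longrightarrow> (\<And>i. i \<le> d \<Longrightarrow> z i = z' i) \<Longrightarrow> form b c d y z = form b c d y' z'"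
  unfolding form_def by (intro sum.cong) auto

lemma form_comm: "form b c d y z = form b c d z y"
  unfolding form_def by (intro sum.cong) (auto simp: ac_simps)

lemma form_smult_left: "form b c d (\<lambda>i. t * y i) z = t * form b c d y z"
  unfolding form_def by (simp add: sum_distrib_left ac_simps)

lemma form_lin2: "form b c d y (\<lambda>i. p * z i + q * w i) = p * form b c d y z + q * form b c d y w"
  unfolding form_def by (simp add: sum_distrib_left sum.distrib algebra_simps)

lemma form_sum_right: "form b c d y (\<lambda>i. \<Sum>m\<in>M. g m * z m i) = (\<Sum>m\<in>M. g m * form b c d y (z m))"
  unfolding form_def by (simp add: sum_distrib_left sum.swap[of _ M] ac_simps)

lemma shift_ident:
  fixes y p aa b c :: "nat \<Rightarrow> 'a::field"
  assumes bd: "b (Suc m) = 0" and c0: "c 0 = 0"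
  shows "(\<Sum>i\<le>Suc m. y i * ((if i = 0 then 0 else b (i-1) * p (i-1)) + aa i * p i
            + (if i = Suc m then 0 else c (i+1) * p (i+1))))
       = (\<Sum>i\<le>Suc m. (c i * y (i-1) + aa i * y i + b i * y (Suc i)) * p i)"
proof -
  have L1: "(\<Sum>i\<le>Suc m. y i * (if i = 0 then 0 else b (i-1) * p (i-1))) = (\<Sum>i\<le>m. y (Suc i) * b i * p i)"
    by (subst sum.atMost_Suc_shift) (simp add: ac_simps)
  have R3: "(\<Sum>i\<le>Suc m. b i * y (Suc i) * p i) = (\<Sum>i\<le>m. y (Suc i) * b i * p i)"
    using bd by (simp add: ac_simps)
  have L3: "(\<Sum>i\<le>Suc m. y i * (if i = Suc m then 0 else c (i+1) * p (i+1))) = (\<Sum>i\<le>m. y i * c (Suc i) * p (Suc i))"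
    by (subst sum.atMost_Suc) (auto simp: ac_simps intro!: sum.cong)
  have R1: "(\<Sum>i\<le>Suc m. c i * y (i-1) * p i) = (\<Sum>i\<le>m. y i * c (Suc i) * p (Suc i))"
    using c0 by (subst sum.atMost_Suc_shift) (simp add: ac_simps)
  have "(\<Sum>i\<le>Suc m. y i * ((if i = 0 then 0 else b (i-1) * p (i-1)) + aa i * p i
            + (if i = Suc m then 0 else c (i+1) * p (i+1))))
     = (\<Sum>i\<le>Suc m. y i * (if i = 0 then 0 else b (i-1) * p (i-1))) + (\<Sum>i\<le>Suc m. aa i * y i * p i)
       + (\<Sum>i\<le>Suc m. y i * (if i = Suc m then 0 else c (i+1) * p (i+1)))"
    unfolding sum.distrib[symmetric] by (intro sum.cong) (simp_all add: algebra_simps)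
  moreover have "(\<Sum>i\<le>Suc m. (c i * y (i-1) + aa i * y i + b i * y (Suc i)) * p i)
     = (\<Sum>i\<le>Suc m. c i * y (i-1) * p i) + (\<Sum>i\<le>Suc m. aa i * y i * p i) + (\<Sum>i\<le>Suc m. b i * y (Suc i) * p i)"
    unfolding sum.distrib[symmetric] by (intro sum.cong) (simp_all add: algebra_simps)
  ultimately show ?thesis using L1 L3 R1 R3 by simp
qed

lemma smult_vec_zero_imp:
  fixes w :: "'a::field vec"
  assumes "w \<in> carrier_vec n" "w \<noteq> 0\<^sub>v n" "t \<cdot>\<^sub>v w = 0\<^sub>v n"
  shows "t = 0"
proof -
  obtain j where j: "j < n" "w $ j \<noteq> 0" using assms(1,2) by (metis eq_vecI index_zero_vec carrier_vecD)
  have "(t \<cdot>\<^sub>v w) $ j = t * w $ j" using j assms(1) by simp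
  then show ?thesis using assms(3) j by simp
qed



theorem proposition8p3:
  fixes d r s :: nat
    and Es :: "nat \<Rightarrow> 'a::field mat" and A :: "'a mat"
    and \<theta> \<theta>s b c :: "nat \<Rightarrow> 'a"
    and v :: "nat \<Rightarrow> 'a vec"
  assumes d: "d \<ge> 1"
    and A: "A \<in> carrier_mat (d+1) (d+1)"
    and Es_carrier: "\<forall>i\<le>d. Es i \<in> carrier_mat (d+1) (d+1)"
    and Es_orth: "\<forall>i\<le>d. \<forall>j\<le>d. Es i * Es j = (if i = j then Es i else 0\<^sub>m (d+1) (d+1))"
    and Es_rank: "\<forall>i\<le>d. vec_space.rank (d+1) (Es i) = 1"
    and tridiag0: "\<forall>i\<le>d. \<forall>j\<le>d. (j + 1 < i \<or> i + 1 < j) \<longrightarrow> Es i * A * Es j = 0\<^sub>m (d+1) (d+1)"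
    and tridiag1: "\<forall>i\<le>d. \<forall>j\<le>d. (i = j + 1 \<or> j = i + 1) \<longrightarrow> Es i * A * Es j \<noteq> 0\<^sub>m (d+1) (d+1)"
    and eig_distinct: "inj_on \<theta> {..d}"
    and eig: "\<forall>i\<le>d. eigenvalue A (\<theta> i)"
    and v_carrier: "\<forall>i\<le>d. v i \<in> carrier_vec (d+1)"
    and v_feasible: "\<forall>i\<le>d. \<exists>w \<in> carrier_vec (d+1). v i = Es i *\<^sub>v w"
    and v_inj: "inj_on v {..d}"
    and v_basis: "vectorspace.basis class_ring (module_vec TYPE('a) (d+1)) (v ` {..d})"
    and expansion: "\<forall>i\<le>d. A *\<^sub>v v i =
          (if i = 0 then 0\<^sub>v (d+1) else b (i - 1) \<cdot>\<^sub>v v (i - 1))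
        + mat_trace (Es i * A) \<cdot>\<^sub>v v i
        + (if i = d then 0\<^sub>v (d+1) else c (i + 1) \<cdot>\<^sub>v v (i + 1))"
    and b_nz: "\<forall>i<d. b i \<noteq> 0"
    and c_nz: "\<forall>i. 1 \<le> i \<and> i \<le> d \<longrightarrow> c i \<noteq> 0"
    and b_d: "b d = 0" and c_0: "c 0 = 0"
    and r: "r \<le> d"
    and row_sum: "\<forall>i\<le>d. c i + mat_trace (Es i * A) + b i = \<theta> r"
    and s: "s \<le> d" "s \<noteq> r"
  shows "(\<forall>j\<le>d. delta_adj (d+1) \<theta> A \<theta>s Es r j \<longleftrightarrow> j = s) \<longleftrightarrow>
         (astar (d+1) \<theta> A \<theta>s Es r \<noteq> \<theta>s 0 \<and>
          (\<forall>i\<le>d. poly (upol (\<lambda>k. mat_trace (Es k * A)) b c i) (\<theta> s) =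
                   (\<theta>s i - astar (d+1) \<theta> A \<theta>s Es r) / (\<theta>s 0 - astar (d+1) \<theta> A \<theta>s Es r)))"
proof -
  define n where "n = d + 1"
  define I where "I = {..d}"
  interpret vec_space "TYPE('a)" n .
  define aa where "aa = (\<lambda>k. mat_trace (Es k * A))"
  define U where "U = (\<lambda>k i. poly (upol aa b c i) (\<theta> k))"
  define Vc where "Vc = (\<lambda>y. vsm n I (\<lambda>i. y i \<cdot>\<^sub>v v i))"
  define x where "x = (\<lambda>k. Vc (U k))"
  define E where "E = (\<lambda>i. prim_idem n \<theta> A i)"
  define D where "D = dual_mat n \<theta>s Es"
  define X where "X = (\<lambda>\<gamma>. vsm n I (\<lambda>k. \<gamma> k \<cdot>\<^sub>v x k))"
  have finI: "finite I" and cardI: "card I = n" unfolding I_def n_def by auto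
  have An: "A \<in> carrier_mat n n" using A n_def by simp
  have vc: "\<And>i. i \<in> I \<Longrightarrow> v i \<in> carrier_vec n" using v_carrier I_def n_def by auto
  have vd: "\<And>i. i \<le> d \<Longrightarrow> dim_vec (v i) = n" using v_carrier n_def by auto
  have vinj: "inj_on v I" using v_inj I_def by simp
  have vB: "basis (v ` I)" using v_basis I_def n_def by simp
  have Vc_car[simp]: "Vc y \<in> carrier_vec n" for y by (simp add: Vc_def)
  have Vc_dim[simp]: "dim_vec (Vc y) = n" for y by (simp add: Vc_def)
  have span_v: "\<exists>y. z = Vc y" if "z \<in> carrier_vec n" for z
    using basis_span[OF vB finI vinj that] by (simp add: Vc_def)
  have indep_v: "y i = y' i" if "Vc y = Vc y'" "i \<in> I" for y y' i
  proof -
    have "Vc (\<lambda>i. y i - y' i) = 0\<^sub>v n" using that unfolding Vc_def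
      by (subst vsm_diff[OF vc]) auto
    then show ?thesis using basis_indep[OF vB finI vinj, of "\<lambda>i. y i - y' i" i] that(2)
      unfolding Vc_def by simp
  qed
  have Vc_smult: "t \<cdot>\<^sub>v Vc y = Vc (\<lambda>i. t * y i)" for t y
    unfolding Vc_def by (rule vsm_smult[OF vc])
  have Vc_cong: "Vc y = Vc y'" if "\<And>i. i \<in> I \<Longrightarrow> y i = y' i" for y y'
    unfolding Vc_def using that by (intro vsm_cong) auto
  obtain m where m: "d = Suc m" using d by (cases d) auto
  have AVc: "A *\<^sub>v Vc y = Vc (Bop aa b c y)" for y
  proof (rule eq_vecI)
    show "dim_vec (A *\<^sub>v Vc y) = dim_vec (Vc (Bop aa b c y))" using An by simp
    fix a assume "a < dim_vec (Vc (Bop aa b c y))"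
    then have a: "a < n" by simp
    have Ava: "(A *\<^sub>v v i) $ a = (if i = 0 then 0 else b (i-1) * v (i-1) $ a) + aa i * v i $ a
          + (if i = d then 0 else c (i+1) * v (i+1) $ a)" if i: "i \<le> d" for i
    proof -
      have "A *\<^sub>v v i = (if i = 0 then 0\<^sub>v n else b (i - 1) \<cdot>\<^sub>v v (i - 1))
        + aa i \<cdot>\<^sub>v v i + (if i = d then 0\<^sub>v n else c (i + 1) \<cdot>\<^sub>v v (i + 1))"
        using expansion i unfolding aa_def n_def by auto
      moreover have "dim_vec (v j) = n" if "j \<le> d" for j using vc that I_def by auto
      ultimately show ?thesis using a i by auto
    qed
    have "(A *\<^sub>v Vc y) $ a = vsm n I (\<lambda>i. A *\<^sub>v (y i \<cdot>\<^sub>v v i)) $ a"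
      unfolding Vc_def using An vc by (subst mult_mat_vec_vsm) auto
    also have "\<dots> = (\<Sum>i\<le>d. y i * ((if i = 0 then 0 else b (i-1) * v (i-1) $ a) + aa i * v i $ a
          + (if i = d then 0 else c (i+1) * v (i+1) $ a)))"
      using a An vc Ava unfolding I_def by (auto intro!: sum.cong simp: mult_mat_vec)
    also have "\<dots> = (\<Sum>i\<le>d. (c i * y (i-1) + aa i * y i + b i * y (Suc i)) * v i $ a)"
      unfolding m by (rule shift_ident) (use b_d c_0 m in auto)
    also have "\<dots> = Vc (Bop aa b c y) $ a"
      unfolding Vc_def Bop_def I_def using a vd by (auto intro!: sum.cong)
    finally show "(A *\<^sub>v Vc y) $ a = Vc (Bop aa b c y) $ a" .
  qed
  have Vc0: "Vc (\<lambda>i. 0) = 0\<^sub>v n" unfolding Vc_def by (rule vsm_zero[OF vc]) auto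
  have eigU: "Bop aa b c (U k) i = \<theta> k * U k i" if k: "k \<le> d" and i: "i \<le> d" for k i
  proof -
    obtain z where z: "z \<in> carrier_vec n" "z \<noteq> 0\<^sub>v n" "A *\<^sub>v z = \<theta> k \<cdot>\<^sub>v z"
      using eig k An unfolding eigenvalue_def eigenvector_def by auto
    obtain y where zy: "z = Vc y" using span_v z(1) by auto
    have "Vc (Bop aa b c y) = Vc (\<lambda>i. \<theta> k * y i)"
      using z(3) AVc[of y] Vc_smult[of "\<theta> k" y] unfolding zy by simp
    from indep_v[OF this] have ey: "\<forall>i\<le>d. Bop aa b c y i = \<theta> k * y i"
      unfolding I_def by blast
    note yU = eig_coord[OF b_nz c_0 ey]
    have y0: "y 0 \<noteq> 0"
    proof
      assume "y 0 = 0"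
      then have "Vc y = Vc (\<lambda>i. 0)" using yU
        by (intro Vc_cong) (metis I_def atMost_iff mult_zero_left)
      then show False using z(2) Vc0 zy by simp
    qed
    show ?thesis
    proof (cases "i < d")
      case True then show ?thesis unfolding U_def by (intro upol_rec) (use b_nz c_0 True in auto)
    next
      case False
      then have id: "i = d" using i by simp
      have e1: "y (d-1) = y 0 * U k (d-1)" "y d = y 0 * U k d"
        using yU[rule_format, of "d-1"] yU[rule_format, of d] unfolding U_def by auto
      have "y 0 * Bop aa b c (U k) d = Bop aa b c y d"
        unfolding Bop_def e1 using b_d by (simp add: algebra_simps)
      also have "\<dots> = \<theta> k * y d" using ey by simp
      also have "\<dots> = y 0 * (\<theta> k * U k d)" unfolding e1 by simp
      finally show ?thesis using y0 id by simp
    qed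
  qed
  have Ur: "U r i = 1" if "i \<le> d" for i
  proof -
    have "\<forall>i\<le>d. Bop aa b c (\<lambda>_. 1) i = \<theta> r * 1" using row_sum unfolding Bop_def aa_def by simp
    from eig_coord[OF b_nz c_0 this] that show ?thesis by (simp add: U_def)
  qed
  have xc[simp]: "x k \<in> carrier_vec n" for k by (simp add: x_def)
  have xdim[simp]: "dim_vec (x k) = n" for k by (simp add: x_def)
  have Ax: "A *\<^sub>v x k = \<theta> k \<cdot>\<^sub>v x k" if "k \<le> d" for k
  proof -
    have "A *\<^sub>v x k = Vc (Bop aa b c (U k))" by (simp add: x_def AVc)
    also have "\<dots> = Vc (\<lambda>i. \<theta> k * U k i)" using eigU that by (intro Vc_cong) (auto simp: I_def)
    finally show ?thesis by (simp add: x_def Vc_smult)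
  qed
  have x0: "x k \<noteq> 0\<^sub>v n" for k
  proof
    assume "x k = 0\<^sub>v n"
    then have "Vc (U k) = Vc (\<lambda>i. 0)" using Vc0 by (simp add: x_def)
    from indep_v[OF this, of 0] show False by (simp add: U_def I_def)
  qed
  have thinj: "inj_on \<theta> {..<n}" using eig_distinct n_def by (simp add: lessThan_Suc_atMost)
  have Ec[simp]: "E i \<in> carrier_mat n n" if "i \<le> d" for i
  proof -
    have Ax0: "A *\<^sub>v x 0 = \<theta> 0 \<cdot>\<^sub>v x 0" using Ax by simp
    show ?thesis using prim_idem_eig(2)[OF An xc Ax0 thinj, where i=i] that n_def by (simp add: E_def)
  qed
  have Ex: "E i *\<^sub>v x k = (if i = k then x k else 0\<^sub>v n)" if "i \<le> d" "k \<le> d" for i k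
    using prim_idem_eig(1)[OF An xc Ax[OF that(2)] thinj, where i=i] that n_def by (simp add: E_def)
  have EX: "E i *\<^sub>v X \<gamma> = \<gamma> i \<cdot>\<^sub>v x i" if "i \<le> d" for i \<gamma>
  proof -
    have "E i *\<^sub>v X \<gamma> = vsm n I (\<lambda>k. E i *\<^sub>v (\<gamma> k \<cdot>\<^sub>v x k))"
      unfolding X_def using that by (intro mult_mat_vec_vsm[of _ n n]) auto
    also have "\<dots> = vsm n I (\<lambda>k. if k = i then \<gamma> i \<cdot>\<^sub>v x i else 0\<^sub>v n)"
      using that by (intro vsm_cong) (auto simp: mult_mat_vec[of _ n n] Ex I_def)
    also have "\<dots> = \<gamma> i \<cdot>\<^sub>v x i" using that finI by (intro vsm_delta) (auto simp: I_def)
    finally show ?thesis .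
  qed
  have indx: "\<gamma> k = 0" if "X \<gamma> = 0\<^sub>v n" "k \<le> d" for \<gamma> k
  proof -
    have "E k *\<^sub>v 0\<^sub>v n = 0\<^sub>v n" using Ec[OF that(2)] by (intro eq_vecI) (auto simp: scalar_prod_def)
    then have "\<gamma> k \<cdot>\<^sub>v x k = 0\<^sub>v n" using EX[OF that(2), of \<gamma>] that(1) by simp
    then show ?thesis using x0[of k] smult_vec_zero_imp xc by blast
  qed
  have xinj: "inj_on x I"
  proof (rule inj_onI)
    fix j k assume jk: "j \<in> I" "k \<in> I" "x j = x k"
    show "j = k"
    proof (rule ccontr)
      assume "j \<noteq> k"
      then have "E j *\<^sub>v x k = 0\<^sub>v n" using Ex[of j k] jk by (auto simp: I_def)
      moreover have "E j *\<^sub>v x j = x j" using Ex[of j j] jk by (auto simp: I_def)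
      ultimately show False using jk(3) x0[of j] by simp
    qed
  qed
  have xB: "basis (x ` I)"
    by (intro indep_basis[OF finI xinj _ cardI]) (use indx in \<open>auto simp: X_def I_def\<close>)
  have span_x: "\<exists>\<gamma>. z = X \<gamma>" if "z \<in> carrier_vec n" for z
    using basis_span[OF xB finI xinj that] by (simp add: X_def)
  have X_Vc: "X \<gamma> = Vc (\<lambda>i. \<Sum>k\<in>I. \<gamma> k * U k i)" for \<gamma>
    unfolding X_def x_def Vc_def by (rule vsm_comb[OF vc])
  have Es_v: "Es i *\<^sub>v v j = (if i = j then v j else 0\<^sub>v n)" if ij: "i \<le> d" "j \<le> d" for i j
  proof -
    obtain w where w: "w \<in> carrier_vec n" "v j = Es j *\<^sub>v w" using v_feasible ij n_def by auto
    have "Es i *\<^sub>v v j = (Es i * Es j) *\<^sub>v w" unfolding w(2)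
      using w(1) Es_carrier ij n_def by (intro assoc_mult_mat_vec[symmetric, of _ n n _ n]) auto
    moreover have "0\<^sub>m n n *\<^sub>v w = 0\<^sub>v n" using w(1) by (intro eq_vecI) (auto simp: scalar_prod_def)
    ultimately show ?thesis using Es_orth ij w n_def by auto
  qed
  have DF: "D \<in> carrier_mat n n \<and> D *\<^sub>v v j = (\<Sum>i\<leftarrow>[0..<n]. if i = j then \<theta>s i else 0) \<cdot>\<^sub>v v j"
    if "j \<le> d" for j
    unfolding D_def dual_mat_def by (rule dual_foldr) (use that Es_carrier Es_v v_carrier n_def in auto)
  have Dc[simp]: "D \<in> carrier_mat n n" using DF[of 0] by simp
  have Dv: "D *\<^sub>v v j = \<theta>s j \<cdot>\<^sub>v v j" if "j \<le> d" for j
  proof -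
    have "(\<Sum>i\<leftarrow>[0..<n]. if i = j then \<theta>s i else 0) = \<theta>s j"
      using that n_def by (simp add: interv_sum_list_conv_sum_set_nat)
    then show ?thesis using DF[OF that] by simp
  qed
  have DVc: "D *\<^sub>v Vc y = Vc (\<lambda>i. \<theta>s i * y i)" for y
  proof -
    have "D *\<^sub>v Vc y = vsm n I (\<lambda>i. D *\<^sub>v (y i \<cdot>\<^sub>v v i))"
      unfolding Vc_def using vc by (intro mult_mat_vec_vsm[of _ n n]) auto
    also have "\<dots> = Vc (\<lambda>i. \<theta>s i * y i)"
      unfolding Vc_def using vc by (intro vsm_cong) (auto simp: mult_mat_vec[of _ n n] Dv I_def ac_simps)
    finally show ?thesis .
  qed
  have U0[simp]: "U k 0 = 1" for k by (simp add: U_def)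
  have span_U: "\<exists>\<gamma>. \<forall>i\<le>d. y i = (\<Sum>k\<in>I. \<gamma> k * U k i)" for y
  proof -
    obtain \<gamma> where "Vc y = X \<gamma>" using span_x[OF Vc_car] by auto
    then have "Vc y = Vc (\<lambda>i. \<Sum>k\<in>I. \<gamma> k * U k i)" using X_Vc by simp
    then show ?thesis using indep_v by (auto simp: I_def)
  qed
  define N where "N = (\<lambda>k. form b c d (U k) (U k))"
  have orth: "form b c d (U j) (U k) = 0" if jk: "j \<le> d" "k \<le> d" "j \<noteq> k" for j k
  proof -
    have "\<theta> j * form b c d (U j) (U k) = form b c d (\<lambda>i. \<theta> j * U j i) (U k)"
      by (simp add: form_smult_left)
    also have "\<dots> = form b c d (Bop aa b c (U j)) (U k)"
      using jk by (intro form_cong) (auto simp: eigU)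
    also have "\<dots> = form b c d (U j) (Bop aa b c (U k))" by (rule form_selfadj[where b=b and c=c and d=d, OF c_nz c_0 b_d])
    also have "\<dots> = form b c d (U j) (\<lambda>i. \<theta> k * U k i)"
      using jk by (intro form_cong) (auto simp: eigU)
    also have "\<dots> = \<theta> k * form b c d (U j) (U k)"
      by (subst form_comm, subst form_smult_left, subst form_comm) simp
    finally have "(\<theta> j - \<theta> k) * form b c d (U j) (U k) = 0" by (simp add: algebra_simps)
    moreover have "\<theta> j \<noteq> \<theta> k" using eig_distinct jk by (auto simp: inj_on_def)
    ultimately show ?thesis by simp
  qed
  have sum_orth: "(\<Sum>m\<in>I. g m * form b c d (U k) (U m)) = g k * N k" if "k \<le> d" for g k
  proof -
    have "(\<Sum>m\<in>I. g m * form b c d (U k) (U m)) = (\<Sum>m\<in>I. if m = k then g k * N k else 0)"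
      using that orth by (intro sum.cong) (auto simp: N_def I_def)
    also have "\<dots> = g k * N k" using that finI by (simp add: I_def)
    finally show ?thesis .
  qed
  have Nnz: "N k \<noteq> 0" if k: "k \<le> d" for k
  proof
    assume N0: "N k = 0"
    obtain \<gamma> where g: "\<forall>i\<le>d. (if i = 0 then 1 else 0) = (\<Sum>m\<in>I. \<gamma> m * U m i)"
      using span_U[of "\<lambda>i. if i = 0 then 1 else 0"] by blast
    have "form b c d (U k) (\<lambda>i. if i = 0 then 1 else 0) = (\<Sum>i\<le>d. if i = 0 then 1 else 0)"
      unfolding form_def by (intro sum.cong) auto
    also have "\<dots> = 1" by simp
    finally have 1: "form b c d (U k) (\<lambda>i. if i = 0 then 1 else 0) = 1" .
    have "form b c d (U k) (\<lambda>i. if i = 0 then 1 else 0) = form b c d (U k) (\<lambda>i. \<Sum>m\<in>I. \<gamma> m * U m i)"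
      by (rule form_cong) (use g in auto)
    also have "\<dots> = (\<Sum>m\<in>I. \<gamma> m * form b c d (U k) (U m))" by (rule form_sum_right)
    also have "\<dots> = \<gamma> k * N k" by (rule sum_orth[OF k])
    finally show False using 1 N0 by simp
  qed
  have "\<forall>j. \<exists>\<gamma>. j \<le> d \<longrightarrow> D *\<^sub>v x j = X \<gamma>" using span_x by (metis Dc mult_mat_vec_carrier xc)
  then obtain \<beta> where \<beta>: "\<And>j. j \<le> d \<Longrightarrow> D *\<^sub>v x j = X (\<beta> j)" by metis
  have CO: "\<theta>s i * U j i = (\<Sum>k\<in>I. \<beta> j k * U k i)" if "j \<le> d" "i \<le> d" for i j
  proof -
    have "Vc (\<lambda>i. \<theta>s i * U j i) = Vc (\<lambda>i. \<Sum>k\<in>I. \<beta> j k * U k i)"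
      using \<beta>[OF that(1)] DVc X_Vc by (simp add: x_def)
    then show ?thesis using indep_v that by (auto simp: I_def)
  qed
  have FB: "form b c d (\<lambda>i. \<theta>s i * U j i) (U m) = \<beta> j m * N m" if jm: "j \<le> d" "m \<le> d" for j m
  proof -
    have "form b c d (\<lambda>i. \<theta>s i * U j i) (U m) = form b c d (U m) (\<lambda>i. \<Sum>k\<in>I. \<beta> j k * U k i)"
      by (subst form_comm) (rule form_cong, auto simp: CO[OF jm(1)])
    also have "\<dots> = (\<Sum>k\<in>I. \<beta> j k * form b c d (U m) (U k))" by (rule form_sum_right)
    also have "\<dots> = \<beta> j m * N m" by (rule sum_orth[OF jm(2)])
    finally show ?thesis .
  qed
  define F where "F = (\<lambda>j. form b c d (\<lambda>i. \<theta>s i * U j i) (U r))"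
  have F1: "F j = \<beta> j r * N r" if "j \<le> d" for j using FB[OF that r] by (simp add: F_def)
  have F2: "F j = \<beta> r j * N j" if "j \<le> d" for j
  proof -
    have "F j = form b c d (\<lambda>i. \<theta>s i * U r i) (U j)"
      unfolding F_def form_def by (intro sum.cong) (simp_all add: ac_simps)
    then show ?thesis using FB[OF r that] by simp
  qed
  have F3: "F j = form b c d (U j) (\<lambda>i. \<theta>s i * U r i)" for j
    unfolding F_def form_def by (intro sum.cong) (simp_all add: ac_simps)
  have Er: "E r \<in> carrier_mat n n" using r by simp
  have ErX: "E r *\<^sub>v X \<gamma> = \<gamma> r \<cdot>\<^sub>v x r" for \<gamma> using EX[OF r] .
  have delta_iff: "delta_adj (d+1) \<theta> A \<theta>s Es r j \<longleftrightarrow> r \<noteq> j \<and> \<beta> j r \<noteq> 0" if j: "j \<le> d" for j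
  proof -
    have Ej: "E j \<in> carrier_mat n n" using j by simp
    have eqM: "prim_idem (d+1) \<theta> A r * dual_mat (d+1) \<theta>s Es * prim_idem (d+1) \<theta> A j = E r * D * E j"
      by (simp add: E_def D_def n_def)
    have M: "E r * D * E j \<in> carrier_mat n n" using Er Ej Dc by (meson mult_carrier_mat)
    have act: "(E r * D * E j) *\<^sub>v z = E r *\<^sub>v (D *\<^sub>v (E j *\<^sub>v z))" if "z \<in> carrier_vec n" for z
      using Er Ej that by (simp add: assoc_mult_mat_vec[of _ n n _ n])
    have "E r * D * E j = 0\<^sub>m n n \<longleftrightarrow> \<beta> j r = 0"
    proof
      assume Z: "E r * D * E j = 0\<^sub>m n n"
      have "(E r * D * E j) *\<^sub>v x j = \<beta> j r \<cdot>\<^sub>v x r"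
        using act[OF xc] Ex[OF j j] \<beta>[OF j] ErX by simp
      moreover have "(E r * D * E j) *\<^sub>v x j = 0\<^sub>v n" unfolding Z
        by (intro eq_vecI) (auto simp: scalar_prod_def)
      ultimately show "\<beta> j r = 0" using smult_vec_zero_imp[OF xc x0] by metis
    next
      assume B0: "\<beta> j r = 0"
      show "E r * D * E j = 0\<^sub>m n n"
      proof (rule mat_zero_from_vec[OF M])
        fix z :: "'a vec" assume z: "z \<in> carrier_vec n"
        obtain \<gamma> where zg: "z = X \<gamma>" using span_x[OF z] by auto
        have "D *\<^sub>v (\<gamma> j \<cdot>\<^sub>v x j) = \<gamma> j \<cdot>\<^sub>v (D *\<^sub>v x j)" by (rule mult_mat_vec[OF Dc xc])
        moreover have "E r *\<^sub>v (\<gamma> j \<cdot>\<^sub>v X (\<beta> j)) = \<gamma> j \<cdot>\<^sub>v (E r *\<^sub>v X (\<beta> j))"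
          by (rule mult_mat_vec[OF Er]) (simp add: X_def)
        ultimately have "(E r * D * E j) *\<^sub>v z = \<gamma> j \<cdot>\<^sub>v (\<beta> j r \<cdot>\<^sub>v x r)"
          using act[OF z] EX[OF j] \<beta>[OF j] ErX unfolding zg by simp
        then show "(E r * D * E j) *\<^sub>v z = 0\<^sub>v n" using B0 by (auto intro!: eq_vecI)
      qed
    qed
    then show ?thesis unfolding delta_adj_def eqM n_def by simp
  qed
  have astar_eq: "astar (d+1) \<theta> A \<theta>s Es r = \<beta> r r"
  proof -
    have "astar (d+1) \<theta> A \<theta>s Es r = mat_trace (E r * D)"
      by (simp add: astar_def E_def D_def n_def)
    also have "\<dots> = \<beta> r r"
    proof (rule trace_rank1[OF _ xc x0])
      show "E r * D \<in> carrier_mat n n" using Er Dc by (meson mult_carrier_mat)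
      fix z :: "'a vec" assume z: "z \<in> carrier_vec n"
      obtain \<gamma> where zg: "D *\<^sub>v z = X \<gamma>" using span_x[of "D *\<^sub>v z"] z Dc by (meson mult_mat_vec_carrier)
      have "(E r * D) *\<^sub>v z = E r *\<^sub>v (D *\<^sub>v z)" by (rule assoc_mult_mat_vec[OF Er Dc z])
      then show "\<exists>l. (E r * D) *\<^sub>v z = l \<cdot>\<^sub>v x r" using zg ErX by auto
    next
      have "(E r * D) *\<^sub>v x r = E r *\<^sub>v (D *\<^sub>v x r)" by (rule assoc_mult_mat_vec[OF Er Dc xc])
      then show "(E r * D) *\<^sub>v x r = \<beta> r r \<cdot>\<^sub>v x r" using \<beta>[OF r] ErX by simp
    qed
    finally show ?thesis .
  qed
  have rs: "r \<noteq> s" using s by simp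
  show ?thesis
  proof
    assume H: "\<forall>j\<le>d. delta_adj (d+1) \<theta> A \<theta>s Es r j \<longleftrightarrow> j = s"
    have bs: "\<beta> r s \<noteq> 0"
    proof -
      have "\<beta> s r \<noteq> 0" using H s delta_iff by auto
      then have "F s \<noteq> 0" using F1[OF s(1)] Nnz[OF r] by simp
      then show ?thesis using F2[OF s(1)] by auto
    qed
    have bj: "\<beta> r j = 0" if j: "j \<le> d" "j \<noteq> r" "j \<noteq> s" for j
    proof -
      have "\<beta> j r = 0" using H j delta_iff[OF j(1)] by auto
      then have "F j = 0" using F1[OF j(1)] by simp
      then show ?thesis using F2[OF j(1)] Nnz[OF j(1)] by simp
    qed
    have lin: "\<theta>s i = \<beta> r r + \<beta> r s * U s i" if i: "i \<le> d" for i
    proof -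
      have "\<theta>s i = (\<Sum>k\<in>I. \<beta> r k * U k i)" using CO[OF r i] Ur[OF i] by simp
      also have "\<dots> = (\<Sum>k\<in>{r,s}. \<beta> r k * U k i)"
        using bj r s finI by (intro sum.mono_neutral_right) (auto simp: I_def)
      also have "\<dots> = \<beta> r r + \<beta> r s * U s i" using rs Ur[OF i] by simp
      finally show ?thesis .
    qed
    have t0: "\<theta>s 0 - \<beta> r r = \<beta> r s" using lin[of 0] by simp
    show "astar (d+1) \<theta> A \<theta>s Es r \<noteq> \<theta>s 0 \<and>
          (\<forall>i\<le>d. poly (upol (\<lambda>k. mat_trace (Es k * A)) b c i) (\<theta> s) =
                   (\<theta>s i - astar (d+1) \<theta> A \<theta>s Es r) / (\<theta>s 0 - astar (d+1) \<theta> A \<theta>s Es r))"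
      unfolding astar_eq t0 using bs t0 lin
      by (auto simp: U_def aa_def field_simps)
  next
    assume H: "astar (d+1) \<theta> A \<theta>s Es r \<noteq> \<theta>s 0 \<and>
          (\<forall>i\<le>d. poly (upol (\<lambda>k. mat_trace (Es k * A)) b c i) (\<theta> s) =
                   (\<theta>s i - astar (d+1) \<theta> A \<theta>s Es r) / (\<theta>s 0 - astar (d+1) \<theta> A \<theta>s Es r))"
    define a0 where "a0 = astar (d+1) \<theta> A \<theta>s Es r"
    have ne: "\<theta>s 0 - a0 \<noteq> 0" using H unfolding a0_def by (metis right_minus_eq)
    have Us: "U s i = (\<theta>s i - a0) / (\<theta>s 0 - a0)" if "i \<le> d" for i
      using H that by (simp add: U_def aa_def a0_def)
    have Fj: "F j = a0 * form b c d (U j) (U r) + (\<theta>s 0 - a0) * form b c d (U j) (U s)" for j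
    proof -
      have "F j = form b c d (U j) (\<lambda>i. a0 * U r i + (\<theta>s 0 - a0) * U s i)"
        unfolding F3 using Us Ur ne by (intro form_cong) (auto simp: field_simps)
      then show ?thesis by (simp add: form_lin2)
    qed
    show "\<forall>j\<le>d. delta_adj (d+1) \<theta> A \<theta>s Es r j \<longleftrightarrow> j = s"
    proof (intro allI impI)
      fix j assume j: "j \<le> d"
      have "delta_adj (d+1) \<theta> A \<theta>s Es r j \<longleftrightarrow> r \<noteq> j \<and> F j \<noteq> 0"
        using delta_iff[OF j] F1[OF j] Nnz[OF r] by simp
      also have "\<dots> \<longleftrightarrow> j = s"
      proof (cases "j = s")
        case True
        then have "F j = (\<theta>s 0 - a0) * N s" using Fj orth[OF s(1) r] rs by (simp add: N_def)
        then show ?thesis using True rs ne Nnz[OF s(1)] by simp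
      next
        case False
        show ?thesis
        proof (cases "j = r")
          case True then show ?thesis using False by simp
        next
          case jr: False
          have "F j = 0" using Fj orth[OF j r jr] orth[OF j s(1) False] by simp
          then show ?thesis using False by simp
        qed
      qed
      finally show "delta_adj (d+1) \<theta> A \<theta>s Es r j \<longleftrightarrow> j = s" .
    qed
  qed
qed


end
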